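(* Let $x\in\mathbb{R}$ be a Diophantine number, let $r=e^{i2\pi x}$ and $\varphi_r(z)=rz$ for $z\in\mathbb{D}$. Then $1\notin\sigma(C_{\varphi_r}, H_0(\mathbb{D}))$. In particular $1\in\sigma^*(C_{\varphi_r}, H_0(\mathbb{D}))\setminus\sigma(C_{\varphi_r}, H_0(\mathbb{D}))$.
   Context: A real number $x$ is Diophantine if there are $\delta\ge 1$ and $c(x)>0$ such that $|x-p/q|\ge c(x)/q^{1+\delta}$ for all rational numbers $p/q$ (with $p\in\mathbb{Z}$, $q\in\mathbb{N}$). $\mathbb{D}$ is the open unit disc; $H_0(\mathbb{D})$ is the Fréchet space of analytic functions $f$ on $\mathbb{D}$ with $f(0)=0$, with the topology of uniform convergence on compact subsets; $C_{\varphi_r}f=f\circ\varphi_r$. For a continuous linear operator $T$ on a Fréchet space $X$: $\rho(T;X)$ is the set of $\lambda$ with $\lambda I-T$ bijective with continuous inverse $R(\lambda,T)$, and $\sigma(T;X)=\mathbb{C}\setminus\rho(T;X)$; $\rho^*(T;X)$ is the set of $\lambda$ having some $\delta>0$ with $\{|\mu-\lambda|<\delta\}\subseteq\rho(T;X)$ and $\{R(\mu,T):|\mu-\lambda|<\delta\}$ equicontinuous, and $\sigma^*(T;X)=\mathbb{C}\setminus\rho^*(T;X)$ (Waelbroeck spectrum). *)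

theory Defs
  imports "HOL-Analysis.Analysis"
begin

definition diophantine :: "real \<Rightarrow> bool" where
  "diophantine x \<longleftrightarrow> (\<exists>\<delta>::real. \<delta> \<ge> 1 \<and> (\<exists>c::real. c > 0 \<and>
     (\<forall>(p::int) (q::nat). q > 0 \<longrightarrow> \<bar>x - real_of_int p / real q\<bar> \<ge> c / real q powr (1 + \<delta>))))"

text \<open>H_0(D): holomorphic on the unit disc, vanishing at 0; normalised to be 0 off the disc
  so that elements are determined by their values on the disc.\<close>
definition H0 :: "(complex \<Rightarrow> complex) set" where
  "H0 = {f. f holomorphic_on ball 0 1 \<and> f 0 = 0 \<and> (\<forall>z. z \<notin> ball 0 1 \<longrightarrow> f z = 0)}"

definition H0_seminorm :: "real \<Rightarrow> (complex \<Rightarrow> complex) \<Rightarrow> real" where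
  "H0_seminorm \<rho> f = (SUP z\<in>cball 0 \<rho>. cmod (f z))"

definition H0_continuous :: "((complex \<Rightarrow> complex) \<Rightarrow> (complex \<Rightarrow> complex)) \<Rightarrow> bool" where
  "H0_continuous S \<longleftrightarrow> (\<forall>\<rho>. 0 \<le> \<rho> \<and> \<rho> < 1 \<longrightarrow> (\<exists>\<sigma> C. 0 \<le> \<sigma> \<and> \<sigma> < 1 \<and> 0 \<le> C \<and>
      (\<forall>f\<in>H0. H0_seminorm \<rho> (S f) \<le> C * H0_seminorm \<sigma> f)))"

definition H0_equicontinuous :: "((complex \<Rightarrow> complex) \<Rightarrow> (complex \<Rightarrow> complex)) set \<Rightarrow> bool" where
  "H0_equicontinuous \<S> \<longleftrightarrow> (\<forall>\<rho>. 0 \<le> \<rho> \<and> \<rho> < 1 \<longrightarrow> (\<exists>\<sigma> C. 0 \<le> \<sigma> \<and> \<sigma> < 1 \<and> 0 \<le> C \<and>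
      (\<forall>S\<in>\<S>. \<forall>f\<in>H0. H0_seminorm \<rho> (S f) \<le> C * H0_seminorm \<sigma> f)))"

definition shift_op :: "complex \<Rightarrow> ((complex \<Rightarrow> complex) \<Rightarrow> (complex \<Rightarrow> complex))
    \<Rightarrow> (complex \<Rightarrow> complex) \<Rightarrow> (complex \<Rightarrow> complex)" where
  "shift_op mu T = (\<lambda>f z. mu * f z - T f z)"

definition H0_resolvent :: "((complex \<Rightarrow> complex) \<Rightarrow> (complex \<Rightarrow> complex)) \<Rightarrow> complex
    \<Rightarrow> (complex \<Rightarrow> complex) \<Rightarrow> (complex \<Rightarrow> complex)" where
  "H0_resolvent T mu = inv_into H0 (shift_op mu T)"

definition H0_resolvent_set :: "((complex \<Rightarrow> complex) \<Rightarrow> (complex \<Rightarrow> complex)) \<Rightarrow> complex set" where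
  "H0_resolvent_set T = {mu. bij_betw (shift_op mu T) H0 H0 \<and> H0_continuous (H0_resolvent T mu)}"

definition H0_spectrum :: "((complex \<Rightarrow> complex) \<Rightarrow> (complex \<Rightarrow> complex)) \<Rightarrow> complex set" where
  "H0_spectrum T = - H0_resolvent_set T"

definition H0_waelbroeck_resolvent_set :: "((complex \<Rightarrow> complex) \<Rightarrow> (complex \<Rightarrow> complex)) \<Rightarrow> complex set" where
  "H0_waelbroeck_resolvent_set T = {mu. \<exists>\<delta>>0. ball mu \<delta> \<subseteq> H0_resolvent_set T \<and>
      H0_equicontinuous (H0_resolvent T ` ball mu \<delta>)}"

definition H0_waelbroeck_spectrum :: "((complex \<Rightarrow> complex) \<Rightarrow> (complex \<Rightarrow> complex)) \<Rightarrow> complex set" where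
  "H0_waelbroeck_spectrum T = - H0_waelbroeck_resolvent_set T"

definition comp_rot :: "complex \<Rightarrow> (complex \<Rightarrow> complex) \<Rightarrow> (complex \<Rightarrow> complex)" where
  "comp_rot r f = (\<lambda>z. f (r * z))"

end

theory Submission imports Defs "HOL-Complex_Analysis.Complex_Analysis" begin

lemma norm_1_minus_exp: "cmod (1 - exp (\<i> * complex_of_real t)) = 2 * \<bar>sin (t/2)\<bar>"
proof -
  have e: "exp (\<i> * complex_of_real t) = Complex (cos t) (sin t)"
    by (simp add: cis_conv_exp[symmetric] cis.code)
  have "cmod (1 - exp (\<i> * complex_of_real t)) = sqrt ((1 - cos t)^2 + (sin t)^2)"
    by (simp add: e cmod_def)
  also have "(1 - cos t)^2 + (sin t)^2 = (2 * sin (t/2))^2"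
  proof -
    have c: "cos t = 1 - 2 * sin (t/2)^2" using cos_double_sin[of "t/2"] by simp
    have "(1 - cos t)^2 + (sin t)^2 = 2 - 2 * cos t"
      by (simp add: power2_eq_square algebra_simps sin_squared_eq)
    then show ?thesis by (simp add: c power2_eq_square algebra_simps)
  qed
  also have "sqrt ((2 * sin (t/2))^2) = 2 * \<bar>sin (t/2)\<bar>"
    by (simp only: real_sqrt_abs abs_mult)
  finally show ?thesis .
qed

lemma abs_sin_shift: "\<bar>sin (pi * (y - of_int p))\<bar> = \<bar>sin (pi * y)\<bar>"
proof -
  have s: "sin (pi * of_int p) = 0" by simp
  have c: "\<bar>cos (pi * of_int p)\<bar> = 1"
    using sin_cos_squared_add[of "pi * of_int p"] s
    by (simp add: power2_eq_square abs_square_eq_1)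
  have "sin (pi * (y - of_int p)) = sin (pi * y) * cos (pi * of_int p)"
    by (simp add: right_diff_distrib sin_diff s)
  then show ?thesis by (simp add: abs_mult c)
qed

lemma sin_lower_pos:
  assumes "0 \<le> t" "t \<le> 1/2"
  shows "t \<le> sin (pi * t)"
proof -
  define y where "y = pi * t"
  have y0: "0 \<le> y" using assms by (simp add: y_def)
  have "\<bar>sin y - (\<Sum>m<3. sin_coeff m * y ^ m)\<bar> \<le> inverse (fact 3) * \<bar>y\<bar> ^ 3"
    by (rule Maclaurin_sin_bound)
  moreover have "(\<Sum>m<3. sin_coeff m * y ^ m) = y"
    by (simp add: eval_nat_numeral sin_coeff_def)
  ultimately have s: "y - y^3/6 \<le> sin y" using y0 by (simp add: eval_nat_numeral abs_if split: if_splits)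
  have yle: "y \<le> pi / 2" using assms by (simp add: y_def)
  have y2: "y^2 \<le> 4"
  proof -
    have "y^2 \<le> (pi/2)^2" using y0 yle by (simp add: power_mono)
    also have "\<dots> \<le> 2^2" using pi_less_4 pi_gt_zero by (intro power_mono) auto
    also have "(2::real)^2 = 4" by simp
    finally show ?thesis .
  qed
  have "t = y / pi" by (simp add: y_def)
  also have "\<dots> \<le> y - y^3/6"
  proof -
    have "y^3 / 6 = y * y^2 / 6" by (simp add: eval_nat_numeral)
    also have "\<dots> \<le> y * 4 / 6" using mult_left_mono[OF y2 y0] by (simp add: divide_right_mono)
    finally have a: "y^3/6 \<le> y * 4 / 6" .
    have "y / pi \<le> y / 3" using y0 pi_gt3 by (intro divide_left_mono) auto
    with a show ?thesis by linarith
  qed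
  also have "\<dots> \<le> sin (pi * t)" using s by (simp add: y_def)
  finally show ?thesis .
qed

lemma sin_lower:
  assumes "\<bar>t\<bar> \<le> 1/2"
  shows "\<bar>t\<bar> \<le> \<bar>sin (pi * t)\<bar>"
proof (cases "t \<ge> 0")
  case True then show ?thesis using sin_lower_pos[of t] assms by simp
next
  case False then show ?thesis using sin_lower_pos[of "-t"] assms by simp
qed


lemma rpow_eq:
  assumes "r = exp (\<i> * complex_of_real (2 * pi * x))"
  shows "r ^ n = exp (\<i> * complex_of_real (2 * pi * (real n * x)))"
proof -
  have "r ^ n = exp (of_nat n * (\<i> * complex_of_real (2 * pi * x)))"
    by (simp add: assms exp_of_nat_mult)
  also have "of_nat n * (\<i> * complex_of_real (2 * pi * x)) = \<i> * complex_of_real (2 * pi * (real n * x))"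
    by (simp add: algebra_simps)
  finally show ?thesis .
qed

lemma norm_1_minus_rpow:
  assumes "r = exp (\<i> * complex_of_real (2 * pi * x))"
  shows "cmod (1 - r ^ n) = 2 * \<bar>sin (pi * (real n * x - of_int p))\<bar>"
  using norm_1_minus_exp[of "2 * pi * (real n * x)"] abs_sin_shift[of "real n * x" p]
  by (simp add: rpow_eq[OF assms])

lemma gap:
  assumes "diophantine x" "r = exp (\<i> * complex_of_real (2 * pi * x))"
  shows "\<exists>d K. K > 0 \<and> (\<forall>n\<ge>1. K / real n powr d \<le> cmod (1 - r^n))"
proof -
  obtain \<delta> c where c: "c > 0" and dio: "\<And>(p::int) (q::nat). q > 0 \<Longrightarrow> \<bar>x - real_of_int p / real q\<bar> \<ge> c / real q powr (1 + \<delta>)"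
    using assms(1) unfolding diophantine_def by blast
  have "c / real n powr \<delta> \<le> cmod (1 - r^n)" if n: "n \<ge> 1" for n
  proof -
    define p where "p = round (real n * x)"
    define t where "t = real n * x - of_int p"
    have t2: "\<bar>t\<bar> \<le> 1/2" using of_int_round_abs_le[of "real n * x"] by (simp add: t_def p_def abs_minus_commute)
    have np: "real n > 0" using n by simp
    have "c / real n powr \<delta> = real n * (c / real n powr (1 + \<delta>))"
      using np by (simp add: powr_add field_simps)
    also have "\<dots> \<le> real n * \<bar>x - real_of_int p / real n\<bar>"
      using dio[of n p] np by (intro mult_left_mono) auto
    also have "\<dots> = \<bar>t\<bar>"
    proof -
      have "real n * \<bar>x - real_of_int p / real n\<bar> = \<bar>real n * (x - real_of_int p / real n)\<bar>"
        using np by (simp add: abs_mult)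
      also have "real n * (x - real_of_int p / real n) = t" using np by (simp add: t_def field_simps)
      finally show ?thesis .
    qed
    also have "\<dots> \<le> \<bar>sin (pi * t)\<bar>" by (rule sin_lower[OF t2])
    also have "\<dots> \<le> cmod (1 - r^n)"
      using norm_1_minus_rpow[OF assms(2), of n p] by (simp add: t_def)
    finally show ?thesis .
  qed
  then show ?thesis using c by blast
qed

lemma rpow_close:
  assumes "r = exp (\<i> * complex_of_real (2 * pi * x))" "e > 0"
  shows "\<exists>n\<ge>1. cmod (1 - r ^ n) < e"
proof -
  define N :: nat where "N = nat \<lceil>2 * pi / e\<rceil> + 1"
  have N0: "N > 0" by (simp add: N_def)
  have NN: "2 * pi / e < real N" unfolding N_def by linarith
  obtain h k where k: "0 < k" "k \<le> int N" "\<bar>of_int k * x - of_int h\<bar> < 1/N"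
    using Dirichlet_approx[OF N0, of x] by blast
  define n where "n = nat k"
  have n1: "n \<ge> 1" using k by (simp add: n_def)
  have rn: "real n = of_int k" using k by (simp add: n_def)
  have "cmod (1 - r ^ n) = 2 * \<bar>sin (pi * (real n * x - of_int h))\<bar>"
    by (rule norm_1_minus_rpow[OF assms(1)])
  also have "\<dots> \<le> 2 * \<bar>pi * (real n * x - of_int h)\<bar>"
    using abs_sin_x_le_abs_x by simp
  also have "\<dots> = 2 * pi * \<bar>of_int k * x - of_int h\<bar>" by (simp add: rn abs_mult)
  also have "\<dots> < 2 * pi * (1 / N)" using k(3) by (intro mult_strict_left_mono) auto
  also have "\<dots> < e" using NN assms(2) N0 by (simp add: field_simps)
  finally show ?thesis using n1 by blast
qed


lemma summ_pos:
  fixes q :: real assumes q: "0 < q" "q < 1"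
  shows "summable (\<lambda>n. real n powr d * q^n)"
proof (rule root_test_convergence)
  have lim: "(\<lambda>n. root n (real n) powr d * q) \<longlonglongrightarrow> 1 powr d * q"
    by (intro tendsto_intros LIMSEQ_root) auto
  have ev: "\<forall>\<^sub>F n in sequentially. root n (real n) powr d * q = root n (norm (real n powr d * q^n))"
    unfolding eventually_sequentially
  proof (intro exI[of _ 1] allI impI)
    fix n :: nat assume n: "1 \<le> n"
    have np: "0 < real n" using n by simp
    have "root n (norm (real n powr d * q^n)) = root n (real n powr d) * root n (q^n)"
      using q by (simp add: real_root_mult)
    also have "root n (q^n) = q" using n q by (simp add: real_root_power_cancel)
    also have "root n (real n powr d) = (real n powr d) powr (1 / real n)"
      using n np by (simp add: root_powr_inverse)
    also have "\<dots> = root n (real n) powr d"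
      using n np by (simp add: root_powr_inverse powr_powr mult.commute)
    finally show "root n (real n) powr d * q = root n (norm (real n powr d * q^n))" by simp
  qed
  show "(\<lambda>n. root n (norm (real n powr d * q^n))) \<longlonglongrightarrow> q"
    using Lim_transform_eventually[OF lim ev] by simp
  show "q < 1" by fact
qed

lemma summ:
  fixes q :: real assumes q: "0 \<le> q" "q < 1"
  shows "summable (\<lambda>n. real n powr d * q^n)"
proof (cases "q = 0")
  case True
  have "(\<lambda>n. real n powr d * q^n) = (\<lambda>n. 0)"
    by (rule ext) (simp add: True power_0_left)
  then show ?thesis by simp
next
  case False then show ?thesis using summ_pos q by simp
qed

definition coef :: "(complex \<Rightarrow> complex) \<Rightarrow> nat \<Rightarrow> complex" where
  "coef f n = (deriv ^^ n) f 0 / fact n"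

lemma H0_D: assumes "f \<in> H0"
  shows "f holomorphic_on ball 0 1" "f 0 = 0" "\<And>z. z \<notin> ball 0 1 \<Longrightarrow> f z = 0"
  using assms by (auto simp: H0_def)

lemma comp_holo:
  assumes "cmod r = 1" "f holomorphic_on ball 0 1"
  shows "(\<lambda>z. f (r*z)) holomorphic_on ball 0 1"
proof -
  have "(f \<circ> (\<lambda>z. r*z)) holomorphic_on ball 0 1"
    by (rule holomorphic_on_compose_gen[where t="ball 0 1"])
       (use assms in \<open>auto intro!: holomorphic_intros simp: norm_mult\<close>)
  then show ?thesis by (simp add: o_def)
qed

lemma shift_eq: "shift_op 1 (comp_rot r) f = (\<lambda>z. f z - f (r*z))"
  by (simp add: shift_op_def comp_rot_def)

lemma H0_shift:
  assumes "cmod r = 1" "f \<in> H0"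
  shows "(\<lambda>z. f z - f (r*z)) \<in> H0"
  using H0_D[OF assms(2)] comp_holo[OF assms(1)]
  by (auto simp: H0_def norm_mult assms(1) intro!: holomorphic_intros)

lemma coef_shift:
  assumes "cmod r = 1" "f \<in> H0"
  shows "coef (\<lambda>z. f z - f (r*z)) n = (1 - r^n) * coef f n"
proof -
  have h: "f holomorphic_on ball 0 1" using H0_D[OF assms(2)] by simp
  have "(deriv ^^ n) (\<lambda>z. f z - f (r*z)) 0 = (deriv ^^ n) f 0 - (deriv ^^ n) (\<lambda>z. f (r*z)) 0"
    by (rule higher_deriv_diff[OF h comp_holo[OF assms(1) h]]) auto
  also have "(deriv ^^ n) (\<lambda>z. f (r*z)) 0 = r^n * (deriv ^^ n) f (r * 0)"
    by (rule higher_deriv_compose_linear[OF h, where S="ball 0 1"]) (auto simp: norm_mult assms(1))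
  finally have eq: "(deriv ^^ n) (\<lambda>z. f z - f (r*z)) 0 = (1 - r^n) * (deriv ^^ n) f 0"
    by (simp add: algebra_simps)
  show ?thesis unfolding coef_def eq by simp
qed

lemma coef0: "f \<in> H0 \<Longrightarrow> coef f 0 = 0"
  by (simp add: coef_def H0_def)

lemma H0_sums:
  assumes "f \<in> H0" "z \<in> ball 0 1"
  shows "(\<lambda>n. coef f n * z^n) sums f z"
  using holomorphic_power_series[OF H0_D(1)[OF assms(1)] assms(2)] by (simp add: coef_def)

lemma sem_facts:
  assumes "f \<in> H0" "0 \<le> \<sigma>" "\<sigma> < 1"
  shows "\<And>z. z \<in> cball 0 \<sigma> \<Longrightarrow> cmod (f z) \<le> H0_seminorm \<sigma> f"
    and "0 \<le> H0_seminorm \<sigma> f"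
proof -
  have sub: "cball 0 \<sigma> \<subseteq> ball (0::complex) 1" using assms by auto
  have "continuous_on (cball 0 \<sigma>) f"
    using holomorphic_on_imp_continuous_on[OF H0_D(1)[OF assms(1)]] continuous_on_subset sub by blast
  then have "compact (f ` cball 0 \<sigma>)" by (intro compact_continuous_image) auto
  then have "bounded (f ` cball 0 \<sigma>)" by (rule compact_imp_bounded)
  then have bdd: "bdd_above ((\<lambda>z. cmod (f z)) ` cball 0 \<sigma>)"
    by (auto simp: bounded_iff bdd_above_def)
  show le: "cmod (f z) \<le> H0_seminorm \<sigma> f" if "z \<in> cball 0 \<sigma>" for z
    unfolding H0_seminorm_def by (rule cSUP_upper[OF that bdd])
  show "0 \<le> H0_seminorm \<sigma> f"
    using le[of 0] assms by simp (meson norm_ge_zero order_trans)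
qed

lemma coef_bound:
  assumes "f \<in> H0" "0 < \<sigma>" "\<sigma> < 1"
  shows "cmod (coef f n) \<le> H0_seminorm \<sigma> f / \<sigma>^n"
proof -
  have sub: "cball 0 \<sigma> \<subseteq> ball (0::complex) 1" using assms by auto
  have "cmod ((deriv ^^ n) f 0) \<le> fact n * H0_seminorm \<sigma> f / \<sigma>^n"
  proof (rule Cauchy_inequality)
    show "f holomorphic_on ball 0 \<sigma>"
      using H0_D(1)[OF assms(1)] sub ball_subset_cball holomorphic_on_subset by blast
    show "continuous_on (cball 0 \<sigma>) f"
      using holomorphic_on_imp_continuous_on[OF H0_D(1)[OF assms(1)]] continuous_on_subset sub by blast
    show "0 < \<sigma>" by fact
    show "cmod (f x) \<le> H0_seminorm \<sigma> f" if "cmod (0 - x) = \<sigma>" for x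
      using sem_facts(1)[OF assms(1) _ assms(3), of x] assms(2) that by simp
  qed
  then show ?thesis by (simp add: coef_def norm_divide field_simps)
qed


lemma norm_suminf_bound:
  fixes u :: "nat \<Rightarrow> complex"
  assumes "summable g" "\<And>n. norm (u n) \<le> g n"
  shows "summable u" "norm (suminf u) \<le> suminf g"
proof -
  have s: "summable (\<lambda>n. norm (u n))"
    by (rule summable_comparison_test'[OF assms(1)]) (use assms(2) in auto)
  then show "summable u" by (rule summable_norm_cancel)
  have "norm (suminf u) \<le> (\<Sum>n. norm (u n))" by (rule summable_norm[OF s])
  also have "\<dots> \<le> suminf g" by (rule suminf_le[OF _ s assms(1)]) (use assms(2) in auto)
  finally show "norm (suminf u) \<le> suminf g" .
qed

lemma key_bound:
  assumes K: "K > 0" and G: "\<forall>n\<ge>1. K / real n powr d \<le> cmod (1 - r^n)"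
    and g: "g \<in> H0" and rho: "0 \<le> \<rho>" "\<rho> < 1" and w: "cmod w \<le> \<rho>"
  shows "cmod (coef g n / (1 - r^n) * w^n)
     \<le> H0_seminorm ((1+\<rho>)/2) g / K * (real n powr d * (\<rho> / ((1+\<rho>)/2))^n)"
proof (cases "n = 0")
  case True then show ?thesis by simp
next
  case False
  define \<sigma> where "\<sigma> = (1+\<rho>)/2"
  define S where "S = H0_seminorm \<sigma> g"
  define a where "a = cmod (coef g n)"
  define u where "u = cmod (1 - r^n)"
  define np where "np = real n powr d"
  have s0: "0 < \<sigma>" "\<sigma> < 1" using rho by (auto simp: \<sigma>_def)
  have np0: "np > 0" using False by (simp add: np_def)
  have a: "a \<le> S / \<sigma>^n" unfolding a_def S_def by (rule coef_bound[OF g s0])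
  have a0: "0 \<le> a" by (simp add: a_def)
  have S0: "0 \<le> S" unfolding S_def using sem_facts(2)[OF g] s0 by simp
  have u: "K / np \<le> u" using G False by (simp add: u_def np_def)
  have "0 < K / np" using K np0 by simp
  then have u0: "u > 0" using u by linarith
  have iu: "1 / u \<le> np / K"
    using u u0 K np0 by (simp add: field_simps)
  have "cmod (coef g n / (1 - r^n) * w^n) = a * cmod w ^ n * (1 / u)"
    by (simp add: a_def u_def norm_divide norm_mult norm_power)
  also have "\<dots> \<le> (S / \<sigma>^n) * \<rho>^n * (np / K)"
    using a a0 iu u0 w S0 s0 rho by (intro mult_mono power_mono) auto
  also have "\<dots> = S / K * (np * (\<rho> / \<sigma>)^n)"
    by (simp add: power_divide field_simps)
  finally show ?thesis by (simp add: S_def np_def \<sigma>_def)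
qed


theorem mainTheorem3:
  fixes x :: real and r :: complex
  assumes "diophantine x"
    and "r = exp (\<i> * complex_of_real (2 * pi * x))"
  shows "1 \<notin> H0_spectrum (comp_rot r)
    \<and> 1 \<in> H0_waelbroeck_spectrum (comp_rot r) - H0_spectrum (comp_rot r)"
proof -
  obtain d K where K: "K > 0" and G: "\<forall>n\<ge>1. K / real n powr d \<le> cmod (1 - r^n)"
    using gap[OF assms] by blast
  have r1: "cmod r = 1" using assms(2) by simp
  define T where "T = comp_rot r"
  define L where "L = shift_op 1 T"
  have Lf: "\<And>f. L f = (\<lambda>z. f z - f (r*z))" by (simp add: L_def T_def shift_eq)
  have maps: "\<And>f. f \<in> H0 \<Longrightarrow> L f \<in> H0" using H0_shift[OF r1] by (simp add: Lf)
  have rn1: "r^n \<noteq> 1" if "n \<ge> 1" for n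
  proof -
    have "0 < K / real n powr d" using K that by simp
    also have "\<dots> \<le> cmod (1 - r^n)" using G that by simp
    finally show ?thesis by auto
  qed
  have coefinv: "coef f n = coef (L f) n / (1 - r^n)" if f: "f \<in> H0" for f n
  proof (cases "n = 0")
    case True then show ?thesis using coef0[OF f] by simp
  next
    case False
    then have "1 - r^n \<noteq> 0" using rn1[of n] by simp
    then show ?thesis using coef_shift[OF r1 f, of n] by (simp add: Lf)
  qed
  have coefz: "coef (\<lambda>z. 0) n = 0" for n by (simp add: coef_def)
  have inj: "inj_on L H0"
  proof (rule inj_onI)
    fix f1 f2 assume f1: "f1 \<in> H0" and f2: "f2 \<in> H0" and eq: "L f1 = L f2"
    define h where "h = (\<lambda>z. f1 z - f2 z)"
    have h: "h \<in> H0" using H0_D[OF f1] H0_D[OF f2]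
      by (auto simp: H0_def h_def intro!: holomorphic_intros)
    have Lh: "L h = (\<lambda>z. 0)"
    proof
      fix z
      have "L h z = L f1 z - L f2 z" by (simp add: Lf h_def)
      then show "L h z = 0" using eq by simp
    qed
    have ch: "coef h n = 0" for n using coefinv[OF h, of n] by (simp add: Lh coefz)
    show "f1 = f2"
    proof
      fix z
      show "f1 z = f2 z"
      proof (cases "z \<in> ball 0 1")
        case True
        have "(\<lambda>n. coef h n * z^n) sums h z" by (rule H0_sums[OF h True])
        then have "(\<lambda>n. 0) sums h z" by (simp add: ch)
        then have "h z = 0" using sums_zero sums_unique2 by blast
        then show ?thesis by (simp add: h_def)
      next
        case False then show ?thesis using H0_D(3)[OF f1] H0_D(3)[OF f2] by simp
      qed
    qed
  qed
  have surj: "g \<in> L ` H0" if g: "g \<in> H0" for g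
  proof -
    define c where "c n = coef g n / (1 - r^n)" for n
    define F where "F z = (if z \<in> ball 0 1 then (\<Sum>n. c n * z^n) else 0)" for z
    have summc: "summable (\<lambda>n. c n * z^n)" if z: "z \<in> ball 0 1" for z
    proof -
      define \<rho> where "\<rho> = cmod z"
      have rho: "0 \<le> \<rho>" "\<rho> < 1" using z by (auto simp: \<rho>_def)
      have q: "0 \<le> \<rho> / ((1+\<rho>)/2)" "\<rho> / ((1+\<rho>)/2) < 1" using rho by (auto simp: field_simps)
      show ?thesis
        by (rule norm_suminf_bound(1)[OF summable_mult[OF summ[OF q]]])
           (unfold c_def, rule key_bound[OF K G g rho], simp add: \<rho>_def)
    qed
    have c0: "c 0 = 0" by (simp add: c_def)
    have Fs: "(\<lambda>n. c n * (w - 0)^n) sums F w" if "w \<in> ball 0 1" for w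
      using summc[OF that] that by (simp add: F_def summable_sums)
    have F: "F \<in> H0"
      unfolding H0_def
      using power_series_holomorphic[of 0 1 c F, OF Fs] c0 by (auto simp: F_def)
    have "L F = g"
    proof
      fix z
      show "L F z = g z"
      proof (cases "z \<in> ball 0 1")
        case True
        have rz: "r * z \<in> ball 0 1" using True r1 by (simp add: norm_mult)
        have "L F z = (\<Sum>n. c n * z^n) - (\<Sum>n. c n * (r*z)^n)"
          using True rz by (simp add: Lf F_def)
        also have "\<dots> = (\<Sum>n. c n * z^n - c n * (r*z)^n)"
          by (rule suminf_diff[OF summc[OF True] summc[OF rz]])
        also have "(\<lambda>n. c n * z^n - c n * (r*z)^n) = (\<lambda>n. coef g n * z^n)"
        proof
          fix n
          show "c n * z^n - c n * (r*z)^n = coef g n * z^n"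
          proof (cases "n = 0")
            case True then show ?thesis using coef0[OF g] c0 by simp
          next
            case False
            then have "1 - r^n \<noteq> 0" using rn1[of n] by simp
            then have cc: "c n * (1 - r^n) = coef g n" by (simp add: c_def)
            have "c n * z^n - c n * (r*z)^n = (c n * (1 - r^n)) * z^n"
              by (simp add: power_mult_distrib algebra_simps)
            then show ?thesis by (simp only: cc)
          qed
        qed
        also have "(\<Sum>n. coef g n * z^n) = g z"
          using H0_sums[OF g True] by (simp add: sums_iff)
        finally show ?thesis .
      next
        case False
        then have rz: "r * z \<notin> ball 0 1" using r1 by (simp add: norm_mult)
        show ?thesis using False rz H0_D(3)[OF g False] by (simp add: Lf F_def)
      qed
    qed
    then show ?thesis using F by blast
  qed
  have bij: "bij_betw L H0 H0"
    unfolding bij_betw_def using inj maps surj by blast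
  have cont: "H0_continuous (inv_into H0 L)"
    unfolding H0_continuous_def
  proof (intro allI impI)
    fix \<rho> :: real assume rho: "0 \<le> \<rho> \<and> \<rho> < 1"
    define \<sigma> where "\<sigma> = (1+\<rho>)/2"
    define q where "q = \<rho> / \<sigma>"
    have q: "0 \<le> q" "q < 1" using rho by (auto simp: q_def \<sigma>_def field_simps)
    define C where "C = (\<Sum>n. real n powr d * q^n) / K"
    have C0: "0 \<le> C" unfolding C_def using K
      by (intro divide_nonneg_pos suminf_nonneg summ q) (use q in \<open>auto intro!: mult_nonneg_nonneg\<close>)
    have "H0_seminorm \<rho> (inv_into H0 L f) \<le> C * H0_seminorm \<sigma> f" if f: "f \<in> H0" for f
    proof -
      define h where "h = inv_into H0 L f"
      have fim: "f \<in> L ` H0" using surj[OF f] .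
      have h: "h \<in> H0" unfolding h_def by (rule inv_into_into[OF fim])
      have Lh: "L h = f" unfolding h_def by (rule f_inv_into_f[OF fim])
      define S where "S = H0_seminorm \<sigma> f"
      have bnd: "cmod (h z) \<le> C * S" if z: "z \<in> cball 0 \<rho>" for z
      proof -
        have zb: "z \<in> ball 0 1" using z rho by auto
        have ch: "coef h n = coef f n / (1 - r^n)" for n using coefinv[OF h, of n] by (simp add: Lh)
        have "h z = (\<Sum>n. coef f n / (1 - r^n) * z^n)"
          using H0_sums[OF h zb] by (simp add: sums_iff ch)
        also have "cmod \<dots> \<le> (\<Sum>n. S / K * (real n powr d * q^n))"
          by (rule norm_suminf_bound(2)[OF summable_mult[OF summ[OF q]]])
             (unfold S_def q_def \<sigma>_def, rule key_bound[OF K G f], use rho z in auto)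
        also have "\<dots> = S / K * (\<Sum>n. real n powr d * q^n)"
          by (rule suminf_mult[OF summ[OF q]])
        also have "\<dots> = C * S" by (simp add: C_def)
        finally show ?thesis .
      qed
      have "H0_seminorm \<rho> h \<le> C * S"
        unfolding H0_seminorm_def[of \<rho>]
        by (rule cSUP_least) (use rho bnd in auto)
      then show ?thesis by (simp add: h_def S_def)
    qed
    moreover have "0 \<le> \<sigma>" "\<sigma> < 1" using rho by (auto simp: \<sigma>_def)
    ultimately show "\<exists>\<sigma> C. 0 \<le> \<sigma> \<and> \<sigma> < 1 \<and> 0 \<le> C \<and>
        (\<forall>f\<in>H0. H0_seminorm \<rho> (inv_into H0 L f) \<le> C * H0_seminorm \<sigma> f)"
      using C0 by blast
  qed
  have notspec: "1 \<notin> H0_spectrum (comp_rot r)"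
    using bij cont
    by (simp add: H0_spectrum_def H0_resolvent_set_def H0_resolvent_def L_def T_def)
  have wael: "1 \<in> H0_waelbroeck_spectrum (comp_rot r)"
  proof -
    have "\<not> ball 1 e \<subseteq> H0_resolvent_set T" if e: "e > 0" for e
    proof
      assume sub: "ball 1 e \<subseteq> H0_resolvent_set T"
      obtain n where n: "n \<ge> 1" "cmod (1 - r^n) < e" using rpow_close[OF assms(2) e] by blast
      have "r^n \<in> ball 1 e" using n by (simp add: dist_norm)
      then have "bij_betw (shift_op (r^n) T) H0 H0" using sub by (auto simp: H0_resolvent_set_def)
      then have inj2: "inj_on (shift_op (r^n) T) H0" by (simp add: bij_betw_def)
      define p :: "complex \<Rightarrow> complex" where "p z = (if z \<in> ball 0 1 then z^n else 0)" for z
      have "p holomorphic_on ball 0 1 \<longleftrightarrow> (\<lambda>z. z^n) holomorphic_on ball 0 1"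
        by (rule holomorphic_cong) (auto simp: p_def)
      then have p: "p \<in> H0" using n by (auto simp: H0_def p_def intro!: holomorphic_intros)
      have z0: "(\<lambda>z. 0) \<in> H0" by (simp add: H0_def)
      have "shift_op (r^n) T p = (\<lambda>z. 0)"
      proof
        fix z
        show "shift_op (r^n) T p z = 0"
        proof (cases "z \<in> ball 0 1")
          case True
          then have "r * z \<in> ball 0 1" using r1 by (simp add: norm_mult)
          then show ?thesis using True
            by (simp add: shift_op_def T_def comp_rot_def p_def power_mult_distrib)
        next
          case False
          then have "r * z \<notin> ball 0 1" using r1 by (simp add: norm_mult)
          then show ?thesis using False by (simp add: shift_op_def T_def comp_rot_def p_def)
        qed
      qed
      moreover have "shift_op (r^n) T (\<lambda>z. 0) = (\<lambda>z. 0)"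
        by (simp add: shift_op_def T_def comp_rot_def)
      ultimately have "p = (\<lambda>z. 0)" using inj_onD[OF inj2 _ p z0] by simp
      then have "p (1/2) = 0" by simp
      then show False by (simp add: p_def)
    qed
    then show ?thesis
      by (auto simp: H0_waelbroeck_spectrum_def H0_waelbroeck_resolvent_set_def T_def)
  qed
  show ?thesis using notspec wael by blast
qed

end
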